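(* Let $Y\in\mathbb{R}^{M\times I}$ and $X\in\mathbb{R}^{N\times I}$ be nonnegative output and input data of $I$ DMUs, fix a DMU $\hat\imath$, an output index $m$, and $\sigma\ge0$, and let $\theta^{\hat\imath}$ be the nominal efficiency score of DMU $\hat\imath$. Let $\bar Y$ equal $Y$ except that the single entry $Y_{m\hat\imath}$ is replaced by $Y_{m\hat\imath}+\Delta_{m\hat\imath}$ (assumed nonnegative), and let $\gamma$ be the efficiency score of DMU $\hat\imath$ computed from $(\bar Y,X)$. If $\Delta_{m\hat\imath}=\sigma$ then $\gamma\ge\theta^{\hat\imath}$; if $\Delta_{m\hat\imath}=-\sigma$ then $\gamma\le\theta^{\hat\imath}$.
   Context: Input-oriented BCC DEA: the efficiency score of DMU $k$ with data $(X,Y)$ is $\min\{\theta: Y\lambda\ge y^k,\ X\lambda\le\theta x^k,\ e^T\lambda=1,\ \lambda\ge0\}$, where $y^k,x^k$ are the $k$-th columns and $e$ is the all-ones vector; the perturbed entry appears both in the $\hat\imath$-th column of $\bar Y$ and in the right-hand side $\bar y^{\hat\imath}$. *)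

theory Defs
  imports Complex_Main
begin

text \<open>Data: Y is an M x I output matrix, X an N x I input matrix, represented as
  functions on indices (row, column) with explicit bounds.
  Input-oriented BCC efficiency score of DMU k:
  min { theta : Y lambda >= y^k, X lambda <= theta x^k, e^T lambda = 1, lambda >= 0 }.\<close>

definition bcc_feasible ::
  "nat \<Rightarrow> nat \<Rightarrow> nat \<Rightarrow> (nat \<Rightarrow> nat \<Rightarrow> real) \<Rightarrow> (nat \<Rightarrow> nat \<Rightarrow> real) \<Rightarrow> nat \<Rightarrow> real set" where
  "bcc_feasible M N I Y X k =
     {\<theta>. \<exists>lam::nat \<Rightarrow> real.
        (\<forall>i<I. 0 \<le> lam i) \<and> (\<Sum>i<I. lam i) = 1 \<and>
        (\<forall>m<M. (\<Sum>i<I. Y m i * lam i) \<ge> Y m k) \<and>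
        (\<forall>n<N. (\<Sum>i<I. X n i * lam i) \<le> \<theta> * X n k)}"

definition bcc_score ::
  "nat \<Rightarrow> nat \<Rightarrow> nat \<Rightarrow> (nat \<Rightarrow> nat \<Rightarrow> real) \<Rightarrow> (nat \<Rightarrow> nat \<Rightarrow> real) \<Rightarrow> nat \<Rightarrow> real" where
  "bcc_score M N I Y X k = Inf (bcc_feasible M N I Y X k)"

definition perturb_entry ::
  "(nat \<Rightarrow> nat \<Rightarrow> real) \<Rightarrow> nat \<Rightarrow> nat \<Rightarrow> real \<Rightarrow> (nat \<Rightarrow> nat \<Rightarrow> real)" where
  "perturb_entry Y m k d = (\<lambda>r c. if r = m \<and> c = k then Y r c + d else Y r c)"

end

theory Submission
  imports Defs
begin

lemma ek_sum: "k < (I::nat) \<Longrightarrow> (\<Sum>i<I. f i * (if i = k then 1 else 0)) = (f k :: real)"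
  by (simp add: if_distrib sum.delta' cong: if_cong)

lemma feas_UNIV:
  assumes "k < I" "\<forall>n<N. X n k = 0"
  shows "bcc_feasible M N I Y X k = UNIV"
proof -
  { fix t :: real
    have "t \<in> bcc_feasible M N I Y X k"
      unfolding bcc_feasible_def
      apply (rule CollectI, rule exI[of _ "\<lambda>i. if i = k then 1 else 0"])
      using assms by (simp add: ek_sum) }
  then show ?thesis by blast
qed

lemma feas_ne:
  assumes "k < I" "\<forall>n<N. \<forall>i<I. 0 \<le> X n i"
  shows "1 \<in> bcc_feasible M N I Y X k"
  unfolding bcc_feasible_def
  apply (rule CollectI, rule exI[of _ "\<lambda>i. if i = k then 1 else 0"])
  using assms by (simp add: ek_sum)

lemma score_mono:
  assumes sub: "bcc_feasible M N I Y1 X k \<subseteq> bcc_feasible M N I Y2 X k"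
    and k: "k < I" and Xnn: "\<forall>n<N. \<forall>i<I. 0 \<le> X n i"
  shows "bcc_score M N I Y2 X k \<le> bcc_score M N I Y1 X k"
proof (cases "\<exists>n<N. X n k > 0")
  case True
  then obtain n where n: "n < N" "X n k > 0" by blast
  have "bdd_below (bcc_feasible M N I Y2 X k)"
  proof (rule bdd_belowI[of _ 0])
    fix t assume "t \<in> bcc_feasible M N I Y2 X k"
    then obtain lam where l: "\<forall>i<I. 0 \<le> lam i"
      "(\<Sum>i<I. X n i * lam i) \<le> t * X n k" using n unfolding bcc_feasible_def by blast
    have "0 \<le> (\<Sum>i<I. X n i * lam i)" using l Xnn n by (intro sum_nonneg) simp
    then have "0 \<le> t * X n k" using l by linarith
    then show "0 \<le> t" using n by (simp add: zero_le_mult_iff)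
  qed
  moreover have "bcc_feasible M N I Y1 X k \<noteq> {}" using feas_ne[OF k Xnn] by blast
  ultimately show ?thesis unfolding bcc_score_def using sub by (intro cInf_superset_mono) auto
next
  case False
  then have "\<forall>n<N. X n k = 0" using Xnn k by force
  then show ?thesis unfolding bcc_score_def using feas_UNIV[OF k] by simp
qed

lemma lam_le1:
  assumes "\<forall>i<I. 0 \<le> lam i" "(\<Sum>i<I. lam i) = (1::real)" "k < (I::nat)"
  shows "lam k \<le> 1"
proof -
  have "lam k \<le> (\<Sum>i<I. lam i)"
    using assms by (intro member_le_sum) (auto simp del: sum_nonneg)
  then show ?thesis using assms by simp
qed

lemma pert_sum:
  assumes "k < I"
  shows "(\<Sum>i<I. perturb_entry Y m k d r i * lam i) =
     (\<Sum>i<I. Y r i * lam i) + (if r = m then d * lam k else 0)"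
proof -
  have "(\<Sum>i<I. perturb_entry Y m k d r i * lam i) =
     (\<Sum>i<I. Y r i * lam i + (if r = m then (if i = k then d * lam i else 0) else 0))"
    unfolding perturb_entry_def by (intro sum.cong) (auto simp: algebra_simps)
  also have "\<dots> = (\<Sum>i<I. Y r i * lam i) + (if r = m then d * lam k else 0)"
    using assms by (simp add: sum.distrib)
  finally show ?thesis .
qed

theorem lemma5:
  fixes M N I :: nat and Y X :: "nat \<Rightarrow> nat \<Rightarrow> real"
    and k m :: nat and \<sigma> \<Delta> :: real
  assumes Ynn: "\<forall>r<M. \<forall>i<I. 0 \<le> Y r i"
    and Xnn: "\<forall>n<N. \<forall>i<I. 0 \<le> X n i"
    and k: "k < I" and m: "m < M"
    and sigma: "0 \<le> \<sigma>"
    and pert_nn: "0 \<le> Y m k + \<Delta>"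
  shows "(\<Delta> = \<sigma> \<longrightarrow> bcc_score M N I (perturb_entry Y m k \<Delta>) X k \<ge> bcc_score M N I Y X k)
       \<and> (\<Delta> = - \<sigma> \<longrightarrow> bcc_score M N I (perturb_entry Y m k \<Delta>) X k \<le> bcc_score M N I Y X k)"
proof (intro conjI impI)
  assume d: "\<Delta> = \<sigma>"
  show "bcc_score M N I (perturb_entry Y m k \<Delta>) X k \<ge> bcc_score M N I Y X k"
  proof (rule score_mono[OF _ k Xnn])
    show "bcc_feasible M N I (perturb_entry Y m k \<Delta>) X k \<subseteq> bcc_feasible M N I Y X k"
    proof
      fix t assume "t \<in> bcc_feasible M N I (perturb_entry Y m k \<Delta>) X k"
      then obtain lam where l: "\<forall>i<I. 0 \<le> lam i" "(\<Sum>i<I. lam i) = 1"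
        "\<forall>r<M. (\<Sum>i<I. perturb_entry Y m k \<Delta> r i * lam i) \<ge> perturb_entry Y m k \<Delta> r k"
        "\<forall>n<N. (\<Sum>i<I. X n i * lam i) \<le> t * X n k" unfolding bcc_feasible_def by blast
      have le1: "lam k \<le> 1" using lam_le1[OF l(1,2) k] .
      have "\<forall>r<M. (\<Sum>i<I. Y r i * lam i) \<ge> Y r k"
      proof (intro allI impI)
        fix r assume r: "r < M"
        show "(\<Sum>i<I. Y r i * lam i) \<ge> Y r k"
        proof (cases "r = m")
          case True
          have "\<Delta> * lam k \<le> \<Delta>" using le1 d sigma by (simp add: mult_left_le)
          then show ?thesis using l(3) r True pert_sum[OF k, of Y m \<Delta> r lam]
            by (auto simp: perturb_entry_def)
        next
          case False
          then show ?thesis using l(3) r pert_sum[OF k, of Y m \<Delta> r lam]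
            by (auto simp: perturb_entry_def)
        qed
      qed
      then show "t \<in> bcc_feasible M N I Y X k" using l unfolding bcc_feasible_def by blast
    qed
  qed
next
  assume d: "\<Delta> = - \<sigma>"
  show "bcc_score M N I (perturb_entry Y m k \<Delta>) X k \<le> bcc_score M N I Y X k"
  proof (rule score_mono[OF _ k Xnn])
    show "bcc_feasible M N I Y X k \<subseteq> bcc_feasible M N I (perturb_entry Y m k \<Delta>) X k"
    proof
      fix t assume "t \<in> bcc_feasible M N I Y X k"
      then obtain lam where l: "\<forall>i<I. 0 \<le> lam i" "(\<Sum>i<I. lam i) = 1"
        "\<forall>r<M. (\<Sum>i<I. Y r i * lam i) \<ge> Y r k"
        "\<forall>n<N. (\<Sum>i<I. X n i * lam i) \<le> t * X n k" unfolding bcc_feasible_def by blast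
      have le1: "lam k \<le> 1" using lam_le1[OF l(1,2) k] .
      have "\<forall>r<M. (\<Sum>i<I. perturb_entry Y m k \<Delta> r i * lam i) \<ge> perturb_entry Y m k \<Delta> r k"
      proof (intro allI impI)
        fix r assume r: "r < M"
        show "(\<Sum>i<I. perturb_entry Y m k \<Delta> r i * lam i) \<ge> perturb_entry Y m k \<Delta> r k"
        proof (cases "r = m")
          case True
          have "\<sigma> * lam k \<le> \<sigma>" using le1 sigma by (simp add: mult_left_le)
          then show ?thesis using l(3) r True pert_sum[OF k, of Y m \<Delta> r lam] d
            by (auto simp: perturb_entry_def)
        next
          case False
          then show ?thesis using l(3) r pert_sum[OF k, of Y m \<Delta> r lam]
            by (auto simp: perturb_entry_def)
        qed
      qed
      then show "t \<in> bcc_feasible M N I (perturb_entry Y m k \<Delta>) X k"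
        using l unfolding bcc_feasible_def by blast
    qed
  qed
qed

end
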